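(* Let $N\ge 2$ and let $\mathbf{g}\in\mathbb{C}^N$ be a window such that, for $\ell=0$ and $\ell=1$, the DFT of the sequence $n\mapsto\mathbf{g}[n]\overline{\mathbf{g}[(n-\ell)\bmod N]}$ is non-vanishing. Then for every non-vanishing $\mathbf{x}\in\mathbb{C}^N$ (i.e. $\mathbf{x}[n]\neq0$ for all $n$), the algebraic algorithm described in the context, applied to $|\mathbf{X}[m,k]|^2$ (the STFT magnitude of $\mathbf{x}$ with $L=1$), outputs $e^{i\phi}\mathbf{x}$ for some $\phi\in\mathbb{R}$.
   Context: Signals and windows are indexed by $\{0,\dots,N-1\}$ and extended $N$-periodically (indices mod $N$). The STFT of $\mathbf{x}\in\mathbb{C}^N$ with window $\mathbf{g}$ and step $L=1$ is $\mathbf{X}[m,k]=\sum_{n=0}^{N-1}\mathbf{x}[n]\mathbf{g}[m-n]e^{-2\pi i kn/N}$, $m,k=0,\dots,N-1$. The DFT of $\mathbf{v}\in\mathbb{C}^N$ is $(\mathbf{F}\mathbf{v})[k]=\sum_n\mathbf{v}[n]e^{-2\pi i kn/N}$. Algebraic algorithm: given $\mathbf{Y}[m,k]=|\mathbf{X}[m,k]|^2$, (1) compute $\mathbf{Z}[m,\ell]=\sum_{k=0}^{N-1}\mathbf{Y}[m,k]e^{-2\pi i k\ell/N}$ and $\mathbf{z}_\ell=(\mathbf{Z}[m,\ell])_{m=0}^{N-1}$; (2) for $\ell=0,1$ compute $\mathbf{x}_\ell=\frac1N\mathbf{G}_\ell^{-1}\mathbf{z}_\ell$, where $\mathbf{G}_\ell$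 is the $N\times N$ circulant matrix with first column $(\mathbf{g}[m]\overline{\mathbf{g}[(m-\ell)\bmod N]})_{m=0}^{N-1}$ (inverted via its DFT diagonalization), and set $\hat{\mathbf{x}}[0]=\sqrt{\mathbf{x}_0[0]}$; (3) recursively for $n=0,\dots,N-2$ set $\hat{\mathbf{x}}[n+1]$ by $\overline{\hat{\mathbf{x}}[n+1]}=\mathbf{x}_1[n]/\hat{\mathbf{x}}[n]$; output $\hat{\mathbf{x}}$. *)

theory Defs
  imports Complex_Main
begin

text \<open>Signals/windows in C^N are functions nat => complex; only the values at
indices 0..N-1 are used, and indices are reduced mod N (periodic extension).\<close>

definition idx :: "nat \<Rightarrow> int \<Rightarrow> nat" where
  "idx N i = nat (i mod int N)"

definition dft :: "nat \<Rightarrow> (nat \<Rightarrow> complex) \<Rightarrow> nat \<Rightarrow> complex" where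
  "dft N v k = (\<Sum>n<N. v n * cis (- 2 * pi * real k * real n / real N))"

definition idft :: "nat \<Rightarrow> (nat \<Rightarrow> complex) \<Rightarrow> nat \<Rightarrow> complex" where
  "idft N w n = (1 / of_nat N) * (\<Sum>k<N. w k * cis (2 * pi * real k * real n / real N))"

text \<open>STFT with step L = 1.\<close>
definition stft :: "nat \<Rightarrow> (nat \<Rightarrow> complex) \<Rightarrow> (nat \<Rightarrow> complex) \<Rightarrow> nat \<Rightarrow> nat \<Rightarrow> complex" where
  "stft N g x m k =
     (\<Sum>n<N. x n * g (idx N (int m - int n)) * cis (- 2 * pi * real k * real n / real N))"

text \<open>First column of the circulant matrix G_l: m |-> g[m] * conj(g[(m-l) mod N]).\<close>
definition win_prod :: "nat \<Rightarrow> (nat \<Rightarrow> complex) \<Rightarrow> nat \<Rightarrow> nat \<Rightarrow> complex" where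
  "win_prod N g l m = g m * cnj (g (idx N (int m - int l)))"

text \<open>Circulant matrix with first column c applied to v, and its inverse via DFT
diagonalization: G^{-1} z = IDFT (DFT z / DFT c).\<close>
definition circulant_mult :: "nat \<Rightarrow> (nat \<Rightarrow> complex) \<Rightarrow> (nat \<Rightarrow> complex) \<Rightarrow> nat \<Rightarrow> complex" where
  "circulant_mult N c v m = (\<Sum>j<N. c (idx N (int m - int j)) * v j)"

definition circulant_inv :: "nat \<Rightarrow> (nat \<Rightarrow> complex) \<Rightarrow> (nat \<Rightarrow> complex) \<Rightarrow> nat \<Rightarrow> complex" where
  "circulant_inv N c z = idft N (\<lambda>k. dft N z k / dft N c k)"

definition zvec :: "nat \<Rightarrow> (nat \<Rightarrow> nat \<Rightarrow> complex) \<Rightarrow> nat \<Rightarrow> nat \<Rightarrow> complex" where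
  "zvec N Y l m = (\<Sum>k<N. Y m k * cis (- 2 * pi * real k * real l / real N))"

definition xvec :: "nat \<Rightarrow> (nat \<Rightarrow> complex) \<Rightarrow> (nat \<Rightarrow> nat \<Rightarrow> complex) \<Rightarrow> nat \<Rightarrow> nat \<Rightarrow> complex" where
  "xvec N g Y l n = (1 / of_nat N) * circulant_inv N (win_prod N g l) (zvec N Y l) n"

primrec recon :: "(nat \<Rightarrow> complex) \<Rightarrow> (nat \<Rightarrow> complex) \<Rightarrow> nat \<Rightarrow> complex" where
  "recon x0 x1 0 = csqrt (x0 0)"
| "recon x0 x1 (Suc n) = cnj (x1 n / recon x0 x1 n)"

definition algebraic_alg :: "nat \<Rightarrow> (nat \<Rightarrow> complex) \<Rightarrow> (nat \<Rightarrow> nat \<Rightarrow> complex) \<Rightarrow> nat \<Rightarrow> complex" where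
  "algebraic_alg N g Y = recon (xvec N g Y 0) (xvec N g Y 1)"

end

theory Submission imports Defs begin

definition E :: "nat \<Rightarrow> int \<Rightarrow> complex" where
  "E N j = cis (2 * pi * of_int j / real N)"

lemma E_add: "E N (a + b) = E N a * E N b"
  unfolding E_def by (simp add: cis_mult add_divide_distrib distrib_left)

lemma E_0[simp]: "E N 0 = 1" by (simp add: E_def)

lemma E_mult_N: assumes "N > 0" shows "E N (int N * t) = 1"
proof -
  have "2 * pi * of_int (int N * t) / real N = 2 * pi * of_int t" using assms by simp
  thus ?thesis unfolding E_def by simp
qed

lemma E_mod: assumes "N > 0" shows "E N (a mod int N) = E N a"
proof -
  have "a = a mod int N + int N * (a div int N)" by simp
  hence "E N a = E N (a mod int N) * E N (int N * (a div int N))" by (metis E_add)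
  thus ?thesis using E_mult_N[OF assms] by simp
qed

lemma E_cong: assumes "N > 0" "a mod int N = b mod int N" shows "E N a = E N b"
  by (metis E_mod assms)

lemma E_cnj: "cnj (E N a) = E N (- a)"
  unfolding E_def by (simp add: cis_cnj)

lemma E_pow: "E N (int k * j) = E N j ^ k"
  by (induction k) (simp_all add: distrib_right E_add)

lemma E_eq_1: assumes "N > 0" "E N j = 1" shows "int N dvd j"
proof -
  have "cos (2 * pi * of_int j / real N) = 1" using assms(2) unfolding E_def
    by (simp add: complex_eq_iff)
  then obtain t :: int where t: "2 * pi * of_int j / real N = of_int t * 2 * pi"
    by (auto simp: cos_one_2pi_int)
  hence "real_of_int j = real_of_int (int N * t)" using assms(1) by (simp add: field_simps)
  hence "j = int N * t" by linarith
  thus ?thesis by simp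
qed

lemma E_sum: assumes "N > 0"
  shows "(\<Sum>k<N. E N (int k * j)) = (if int N dvd j then of_nat N else 0)"
proof (cases "int N dvd j")
  case True
  then obtain t where "j = int N * t" by blast
  hence "\<And>k. E N (int k * j) = 1" using E_mult_N[OF assms, of "int k * t" for k]
    by (simp add: algebra_simps)
  thus ?thesis using True by simp
next
  case False
  hence ne: "E N j \<noteq> 1" using E_eq_1[OF assms] by blast
  have "E N j ^ N = 1" using E_mult_N[OF assms, of j] E_pow[of N N j] by simp
  thus ?thesis using False ne by (simp add: E_pow sum_gp_strict)
qed

lemma cis_E1: "cis (- 2 * pi * real k * real n / real N) = E N (- (int k * int n))"
  unfolding E_def by (simp add: mult.assoc)
lemma cis_E1': "cis (- (2 * pi * real k * real n / real N)) = E N (- (int k * int n))"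
  unfolding E_def by (simp add: mult.assoc)
lemma cis_E2: "cis (2 * pi * real k * real n / real N) = E N (int k * int n)"
  unfolding E_def by (simp add: mult.assoc)

lemma idx_lt: "N > 0 \<Longrightarrow> idx N i < N"
  unfolding idx_def by (simp add: nat_less_iff)
lemma idx_int: "N > 0 \<Longrightarrow> int (idx N i) = i mod int N"
  unfolding idx_def by simp

lemma dvd_iff_idx: assumes "N > 0" "n' < N"
  shows "int N dvd (int n' - i) \<longleftrightarrow> n' = idx N i"
proof -
  have "int N dvd (int n' - i) \<longleftrightarrow> int n' mod int N = i mod int N"
    by (simp add: mod_eq_dvd_iff)
  also have "\<dots> \<longleftrightarrow> int n' = int (idx N i)" using assms by (simp add: idx_int)
  finally show ?thesis by simp
qed

lemma sum_shift: assumes "N > 0"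
  shows "(\<Sum>m<N. F (idx N (int m - j))) = (\<Sum>m<N. F m)"
proof -
  let ?h = "\<lambda>m. idx N (int m - j)"
  have inj: "inj_on ?h {..<N}"
  proof (rule inj_onI)
    fix a b assume ab: "a \<in> {..<N}" "b \<in> {..<N}" "?h a = ?h b"
    hence "(int a - j) mod int N = (int b - j) mod int N" using idx_int[OF assms] by metis
    hence "(int a - j + j) mod int N = (int b - j + j) mod int N" by (rule mod_add_cong) simp
    hence "int a mod int N = int b mod int N" by simp
    thus "a = b" using ab by simp
  qed
  have sub: "?h ` {..<N} \<subseteq> {..<N}" using idx_lt[OF assms] by blast
  have "?h ` {..<N} = {..<N}"
    by (rule endo_inj_surj[OF _ sub inj]) simp
  hence "(\<Sum>m<N. F m) = sum F (?h ` {..<N})" by simp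
  also have "\<dots> = (\<Sum>m<N. F (?h m))" by (simp add: sum.reindex[OF inj])
  finally show ?thesis by simp
qed

lemma sum_delta_idx: fixes f :: "nat \<Rightarrow> complex" assumes "N > 0"
  shows "(\<Sum>n'<N. f n' * (if int N dvd (int n' - i) then of_nat N else 0)) = of_nat N * f (idx N i)"
proof -
  have "(\<Sum>n'<N. f n' * (if int N dvd (int n' - i) then of_nat N else 0))
      = (\<Sum>n'<N. if n' = idx N i then of_nat N * f n' else 0)"
    by (rule sum.cong) (auto simp: dvd_iff_idx[OF assms] mult.commute)
  also have "\<dots> = of_nat N * f (idx N i)" using idx_lt[OF assms] by simp
  finally show ?thesis .
qed


lemma idft_dft: assumes "N > 0" "n < N"
  shows "idft N (dft N y) n = y n"
proof -
  have "(\<Sum>k<N. dft N y k * cis (2 * pi * real k * real n / real N))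
      = (\<Sum>k<N. \<Sum>j<N. y j * E N (int k * (int n - int j)))"
    unfolding dft_def cis_E1 cis_E2 sum_distrib_right
    by (intro sum.cong refl) (simp add: mult.assoc E_add[symmetric] algebra_simps)
  also have "\<dots> = (\<Sum>j<N. y j * (\<Sum>k<N. E N (int k * (int n - int j))))"
    by (subst sum.swap) (simp add: sum_distrib_left)
  also have "\<dots> = (\<Sum>j<N. y j * (if int N dvd (int j - int n) then of_nat N else 0))"
    by (intro sum.cong refl) (simp add: E_sum[OF assms(1)] dvd_diff_commute)
  also have "\<dots> = of_nat N * y n"
    using sum_delta_idx[OF assms(1), of y "int n"] assms idx_int[OF assms(1), of "int n"]
    by (simp add: idx_def)
  finally show ?thesis unfolding idft_def using assms by simp
qed

lemma dft_circ: assumes "N > 0"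
  shows "dft N (circulant_mult N c y) k = dft N c k * dft N y k"
proof -
  have "dft N (circulant_mult N c y) k
     = (\<Sum>j<N. y j * E N (- (int k * int j)) * (\<Sum>m<N. c (idx N (int m - int j)) * E N (- (int k * int (idx N (int m - int j))))))"
  proof -
    have e: "E N (- (int k * int m)) = E N (- (int k * int j)) * E N (- (int k * int (idx N (int m - int j))))" for m j
    proof -
      define t where "t = (int m - int j) div int N"
      have ii: "int (idx N (int m - int j)) = (int m - int j) - int N * t"
        unfolding t_def idx_int[OF assms] by (simp add: minus_div_mult_eq_mod[symmetric] mult.commute)
      have "E N (- (int k * int j)) * E N (- (int k * int (idx N (int m - int j))))
           = E N (- (int k * int j) + - (int k * int (idx N (int m - int j))))" by (rule E_add[symmetric])
      also have "- (int k * int j) + - (int k * int (idx N (int m - int j))) = - (int k * int m) + int N * (int k * t)"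
        unfolding ii by (simp add: algebra_simps)
      also have "E N \<dots> = E N (- (int k * int m))" by (simp only: E_add E_mult_N[OF assms] mult_1_right)
      finally show ?thesis by simp
    qed
    show ?thesis unfolding dft_def circulant_mult_def cis_E1 sum_distrib_right sum_distrib_left
      apply (subst sum.swap)
      apply (intro sum.cong refl)
      subgoal for j m by (subst e[of m j]) (simp only: mult_ac)
      done
  qed
  also have "\<dots> = (\<Sum>j<N. y j * E N (- (int k * int j)) * dft N c k)"
  proof (rule sum.cong[OF refl])
    fix j
    have "(\<Sum>m<N. c (idx N (int m - int j)) * E N (- (int k * int (idx N (int m - int j)))))
        = (\<Sum>m<N. c m * E N (- (int k * int m)))"
      by (rule sum_shift[OF assms, of "\<lambda>m. c m * E N (- (int k * int m))"])
    also have "\<dots> = dft N c k" unfolding dft_def cis_E1 ..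
    finally show "y j * E N (- (int k * int j)) * (\<Sum>m<N. c (idx N (int m - int j)) * E N (- (int k * int (idx N (int m - int j)))))
        = y j * E N (- (int k * int j)) * dft N c k" by simp
  qed
  also have "\<dots> = dft N c k * dft N y k"
    unfolding dft_def[of N y] cis_E1 sum_distrib_left
    by (rule sum.cong[OF refl]) (simp only: mult_ac)
  finally show ?thesis .
qed


lemma idx_comb: assumes "N > 0"
  shows "idx N (int (idx N (int m - int j)) - int l) = idx N (int m - int (idx N (int j + int l)))"
  unfolding idx_int[OF assms] by (simp add: idx_def mod_diff_left_eq mod_diff_right_eq algebra_simps)

lemma zvec_eq: assumes "N > 0"
  shows "zvec N (\<lambda>m k. complex_of_real ((cmod (stft N g x m k))\<^sup>2)) l m
       = of_nat N * circulant_mult N (win_prod N g l) (\<lambda>n. x n * cnj (x (idx N (int n + int l)))) m"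
proof -
  define a where "a n = x n * g (idx N (int m - int n))" for n
  have S: "stft N g x m k = (\<Sum>n<N. a n * E N (- (int k * int n)))" for k
    unfolding stft_def a_def cis_E1 ..
  have C: "cnj (stft N g x m k) = (\<Sum>n<N. cnj (a n) * E N (int k * int n))" for k
    unfolding S by (simp add: E_cnj)
  have "zvec N (\<lambda>m k. complex_of_real ((cmod (stft N g x m k))\<^sup>2)) l m
      = (\<Sum>k<N. (\<Sum>n<N. a n * E N (- (int k * int n))) * (\<Sum>n'<N. cnj (a n') * E N (int k * int n')) * E N (- (int k * int l)))"
    unfolding zvec_def complex_norm_square cis_E1 C S[symmetric] ..
  also have "\<dots> = (\<Sum>k<N. \<Sum>n<N. \<Sum>n'<N. a n * cnj (a n') * E N (int k * (int n' - (int n + int l))))"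
  proof (rule sum.cong[OF refl])
    fix k
    have e: "E N (- (int k * int n)) * E N (int k * int n') * E N (- (int k * int l)) = E N (int k * (int n' - (int n + int l)))" for n n'
      unfolding E_add[symmetric] by (simp add: algebra_simps)
    show "(\<Sum>n<N. a n * E N (- (int k * int n))) * (\<Sum>n'<N. cnj (a n') * E N (int k * int n')) * E N (- (int k * int l))
        = (\<Sum>n<N. \<Sum>n'<N. a n * cnj (a n') * E N (int k * (int n' - (int n + int l))))"
      unfolding sum_distrib_right sum_distrib_left
      apply (subst sum.swap)
      apply (intro sum.cong refl)
      subgoal for n n' by (subst e[symmetric]) (simp only: mult_ac)
            done
  qed
  also have "\<dots> = (\<Sum>n<N. \<Sum>n'<N. \<Sum>k<N. a n * cnj (a n') * E N (int k * (int n' - (int n + int l))))"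
    by (subst sum.swap) (rule sum.cong[OF refl], rule sum.swap)
  also have "\<dots> = (\<Sum>n<N. a n * (\<Sum>n'<N. cnj (a n') * (if int N dvd (int n' - (int n + int l)) then of_nat N else 0)))"
    by (intro sum.cong refl) (simp add: sum_distrib_left[symmetric] E_sum[OF assms] mult.assoc)
  also have "\<dots> = (\<Sum>n<N. a n * (of_nat N * cnj (a (idx N (int n + int l)))))"
    by (intro sum.cong refl) (simp only: sum_delta_idx[OF assms])
  also have "\<dots> = of_nat N * circulant_mult N (win_prod N g l) (\<lambda>n. x n * cnj (x (idx N (int n + int l)))) m"
    unfolding circulant_mult_def win_prod_def sum_distrib_left a_def
    by (intro sum.cong refl) (simp add: idx_comb[OF assms] mult_ac)
  finally show ?thesis .
qed


lemma dft_scale: "dft N (\<lambda>m. a * f m) k = a * dft N f k"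
  unfolding dft_def sum_distrib_left by (simp add: mult.assoc)

lemma xvec_eq: assumes "N > 0" "\<forall>k<N. dft N (win_prod N g l) k \<noteq> 0" "n < N"
  shows "xvec N g (\<lambda>m k. complex_of_real ((cmod (stft N g x m k))\<^sup>2)) l n
       = x n * cnj (x (idx N (int n + int l)))"
proof -
  define y where "y n = x n * cnj (x (idx N (int n + int l)))" for n
  define c where "c = win_prod N g l"
  have z: "zvec N (\<lambda>m k. complex_of_real ((cmod (stft N g x m k))\<^sup>2)) l = (\<lambda>m. of_nat N * circulant_mult N c y m)"
    using zvec_eq[OF assms(1)] unfolding y_def c_def by blast
  have dz: "dft N (\<lambda>m. of_nat N * circulant_mult N c y m) k = of_nat N * (dft N c k * dft N y k)" for k
    unfolding dft_scale dft_circ[OF assms(1)] ..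
  have "idft N (\<lambda>k. dft N (\<lambda>m. of_nat N * circulant_mult N c y m) k / dft N c k) n
      = idft N (\<lambda>k. of_nat N * dft N y k) n"
    unfolding idft_def dz using assms(2) unfolding c_def by (intro arg_cong2[where f="(*)"] refl sum.cong) auto
  also have "\<dots> = of_nat N * idft N (dft N y) n"
    unfolding idft_def by (simp add: sum_distrib_left mult_ac)
  also have "\<dots> = of_nat N * y n" using idft_dft[OF assms(1,3)] by simp
  finally show ?thesis unfolding xvec_def circulant_inv_def z c_def[symmetric] y_def using assms(1) by simp
qed


theorem theorem2:
  fixes N :: nat and g x :: "nat \<Rightarrow> complex"
  assumes "N \<ge> 2"
    and "\<forall>l\<in>{0, 1}. \<forall>k<N. dft N (win_prod N g l) k \<noteq> 0"
    and "\<forall>n<N. x n \<noteq> 0"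
  shows "\<exists>\<phi>::real. \<forall>n<N.
           algebraic_alg N g (\<lambda>m k. complex_of_real ((cmod (stft N g x m k))\<^sup>2)) n
             = cis \<phi> * x n"
proof -
  define Y where "Y = (\<lambda>m k. complex_of_real ((cmod (stft N g x m k))\<^sup>2))"
  have N0: "N > 0" using assms(1) by simp
  have x0: "xvec N g Y 0 n = x n * cnj (x n)" if "n < N" for n
    using xvec_eq[OF N0 _ that, of g 0 x] assms(2) that unfolding Y_def by (simp add: idx_def)
  have x1: "xvec N g Y 1 n = x n * cnj (x (Suc n))" if "Suc n < N" for n
  proof -
    have "idx N (int n + int 1) = Suc n" using that by (simp add: idx_def)
    thus ?thesis using xvec_eq[OF N0 _ , of g 1 n x] assms(2) that unfolding Y_def by simp
  qed
  define \<phi> where "\<phi> = - Arg (x 0)"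
  have nz0: "x 0 \<noteq> 0" using assms(3) N0 by simp
  have c\<phi>: "cis \<phi> = inverse (sgn (x 0))" unfolding \<phi>_def using nz0 by (simp add: cis_Arg[symmetric])
  have "\<forall>n. n < N \<longrightarrow> recon (xvec N g Y 0) (xvec N g Y 1) n = cis \<phi> * x n"
  proof (intro allI)
    fix n show "n < N \<longrightarrow> recon (xvec N g Y 0) (xvec N g Y 1) n = cis \<phi> * x n"
    proof (induction n)
      case 0
      have "recon (xvec N g Y 0) (xvec N g Y 1) 0 = csqrt (x 0 * cnj (x 0))" using x0[OF N0] by simp
      also have "\<dots> = complex_of_real (cmod (x 0))"
        by (simp add: complex_norm_square[symmetric] of_real_sqrt[symmetric])
      also have "\<dots> = cis \<phi> * x 0" unfolding c\<phi> using nz0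
        by (simp add: sgn_eq field_simps)
      finally show ?case by simp
    next
      case (Suc n)
      show ?case
      proof
        assume a: "Suc n < N"
        have r: "recon (xvec N g Y 0) (xvec N g Y 1) n = cis \<phi> * x n" using Suc a by simp
        have nz: "x n \<noteq> 0" using assms(3) a by simp
        have "recon (xvec N g Y 0) (xvec N g Y 1) (Suc n) = cnj (x n * cnj (x (Suc n)) / (cis \<phi> * x n))"
          using r x1[OF a] by simp
        also have "\<dots> = cnj (cnj (x (Suc n)) / cis \<phi>)" using nz by simp
        also have "\<dots> = cis \<phi> * x (Suc n)" by (simp add: cis_cnj cis_divide[symmetric] field_simps cis_mult)
        finally show "recon (xvec N g Y 0) (xvec N g Y 1) (Suc n) = cis \<phi> * x (Suc n)" .
      qed
    qed
  qed
  thus ?thesis unfolding algebraic_alg_def Y_def[symmetric] by blast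
qed

end
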